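(* Let $s_*\in\mathbb{R}$ and let $\gamma,\delta:[s_*,\infty)\to\mathbb{R}$ be functions with $|\gamma(s)|+|\delta(s)|\le\frac{C}{s^{10}}$ for some constant $C$. Let $\phi:[s_*,\infty)\to\mathbb{R}$ be a $C^1$ solution of $\phi'=(1+\phi^2)\Big(1+\gamma(s)-\big(\tfrac1s+\delta(s)\big)\phi\Big)$. Then $\phi(s)=s-\frac1s+O(s^{-2})$ as $s\to\infty$. *)

theory Defs
  imports "HOL-Analysis.Analysis" "HOL-Library.Landau_Symbols"
begin

end

theory Submission
  imports Defs
begin

lemma trap:
  fixes h h' :: "real \<Rightarrow> real"
  assumes d: "\<And>x. x \<ge> b \<Longrightarrow> (h has_real_derivative h' x) (at x)"
    and neg: "\<And>x. x \<ge> b \<Longrightarrow> h x > 0 \<Longrightarrow> h' x \<le> 0"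
    and hb: "h b \<le> 0" and t: "t \<ge> b"
  shows "h t \<le> 0"
proof (rule ccontr)
  assume "\<not> h t \<le> 0" hence ht: "h t > 0" by simp
  define S where "S = {b..t} \<inter> h -` {..0}"
  have cont: "continuous_on {b..t} h"
    by (intro continuous_at_imp_continuous_on ballI) (meson DERIV_isCont atLeastAtMost_iff d)
  have cl: "closed S" unfolding S_def by (rule continuous_closed_preimage[OF cont]) auto
  have bS: "b \<in> S" using hb t by (auto simp: S_def)
  have bdd: "bdd_above S" by (auto simp: S_def bdd_above_def)
  define t0 where "t0 = Sup S"
  have t0S: "t0 \<in> S" unfolding t0_def using closed_contains_Sup bS bdd cl by blast
  have "t0 \<noteq> t" using t0S ht by (auto simp: S_def)
  hence tt: "t0 < t" "b \<le> t0" "h t0 \<le> 0" using t0S by (auto simp: S_def)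
  have pos: "h x > 0" if "t0 < x" "x \<le> t" for x
  proof (rule ccontr)
    assume "\<not> h x > 0"
    hence "x \<in> S" using that tt by (auto simp: S_def)
    hence "x \<le> t0" unfolding t0_def using bdd by (rule cSup_upper)
    thus False using that by simp
  qed
  obtain z where z: "t0 < z" "z < t" "h t - h t0 = (t - t0) * h' z"
    using MVT2[OF tt(1), of h h'] d tt by force
  have "h' z \<le> 0" using neg[of z] pos[of z] z tt by auto
  hence "(t - t0) * h' z \<le> 0" using tt by (simp add: mult_nonneg_nonpos)
  thus False using z ht tt by linarith
qed

lemma eventually_nonpos:
  fixes h h' :: "real \<Rightarrow> real"
  assumes a: "a > 0" and d: "\<And>x. x \<ge> a \<Longrightarrow> (h has_real_derivative h' x) (at x)"
    and neg: "\<And>x. x \<ge> a \<Longrightarrow> h x > 0 \<Longrightarrow> h' x \<le> -1/x"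
  shows "\<exists>b\<ge>a. \<forall>x\<ge>b. h x \<le> 0"
proof (cases "\<exists>b\<ge>a. h b \<le> 0")
  case True
  then obtain b where b: "b \<ge> a" "h b \<le> 0" by auto
  have "\<forall>x\<ge>b. h x \<le> 0"
  proof (intro allI impI)
    fix x assume "x \<ge> b"
    show "h x \<le> 0"
    proof (rule trap[of b h h'])
      fix y assume y: "y \<ge> b"
      show "(h has_real_derivative h' y) (at y)" using d y b by auto
      assume "h y > 0"
      hence "h' y \<le> -1/y" using neg y b by auto
      also have "\<dots> \<le> 0" using y b a by simp
      finally show "h' y \<le> 0" .
    qed (use b \<open>x \<ge> b\<close> in auto)
  qed
  thus ?thesis using b by auto
next
  case False
  hence pos: "\<And>x. x \<ge> a \<Longrightarrow> h x > 0" by auto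
  define X where "X = exp (\<bar>h a\<bar> + \<bar>ln a\<bar> + 1)"
  have lnX: "ln X = \<bar>h a\<bar> + \<bar>ln a\<bar> + 1" by (simp add: X_def)
  have "a = exp (ln a)" using a by simp
  also have "\<dots> < X" unfolding X_def by simp
  finally have aX: "a < X" .
  obtain z where z: "a < z" "z < X" "(h X + ln X) - (h a + ln a) = (X - a) * (h' z + 1/z)"
    using MVT2[OF aX, of "\<lambda>x. h x + ln x" "\<lambda>x. h' x + 1/x"] d a
    by (force intro!: derivative_eq_intros)
  have "h' z + 1/z \<le> 0" using neg[of z] pos[of z] z by auto
  hence "(X - a) * (h' z + 1/z) \<le> 0" using aX by (simp add: mult_nonneg_nonpos)
  hence "h X \<le> h a + ln a - ln X" using z by linarith
  hence "h X < 0" using lnX by linarith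
  thus ?thesis using pos[of X] aX by auto
qed

lemma p1: fixes s :: real assumes "s \<ge> 20" shows "(1+(s+1)^2) * (s+2) \<le> s^4"
proof -
  have e: "(1+(s+1)^2) * (s+2) = s^3 + 4 * s^2 + 6 * s + 4" "s^4 = s^3 * s" "s^3 = s^2 * s" "s^2 = s * s"
    by (simp_all add: algebra_simps power2_eq_square power3_eq_cube power4_eq_xxxx)
  have "s^3 * s \<ge> s^3 * 20" using assms by (intro mult_left_mono) auto
  moreover have "s^2 * s \<ge> s^2 * 20" using assms by (intro mult_left_mono) auto
  moreover have "s * s \<ge> s * 20" using assms by (intro mult_left_mono) auto
  ultimately show ?thesis using assms e by linarith
qed

lemma Qid:
  fixes s y gam del :: real assumes "s \<noteq> 0"
  shows "(1+y^2) * (1 + gam - (1/s+del) * y) - 1 - 1/s^2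
     = (y-s) * (y+s)/s^2 - (1+y^2) * (y - s + 1/s)/s + (1+y^2) * (gam - del * y)"
  using assms by (simp add: field_simps power2_eq_square)

lemma PE:
  fixes s y gam del :: real
  assumes s: "s \<ge> 20" and y: "s - 2 \<le> y" "y \<le> s + 1" and D: "\<bar>gam\<bar> + \<bar>del\<bar> \<le> 1/s^6"
  shows "\<bar>(1+y^2) * (gam - del * y)\<bar> \<le> 1/s^2"
proof -
  have ay: "\<bar>y\<bar> \<le> s + 2" using y s by auto
  have "\<bar>gam - del * y\<bar> \<le> \<bar>gam\<bar> + \<bar>del\<bar> * \<bar>y\<bar>" by (simp add: abs_mult abs_triangle_ineq4 order_trans[OF abs_triangle_ineq4])
  also have "\<dots> \<le> \<bar>gam\<bar> * (s+2) + \<bar>del\<bar> * (s+2)"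
    using ay s by (intro add_mono mult_left_mono) (auto intro: order_trans[of _ 1] simp: mult_le_cancel_left1)
  also have "\<dots> = (\<bar>gam\<bar> + \<bar>del\<bar>) * (s+2)" by (simp add: algebra_simps)
  also have "\<dots> \<le> (1/s^6) * (s+2)" using D s by (intro mult_right_mono) auto
  finally have E: "\<bar>gam - del * y\<bar> \<le> (s+2)/s^6" by simp
  have y2: "y^2 \<le> (s+1)^2" using y s by (intro power_mono) auto
  have "\<bar>(1+y^2) * (gam - del * y)\<bar> = (1+y^2) * \<bar>gam - del * y\<bar>" by (simp add: abs_mult)
  also have "\<dots> \<le> (1+(s+1)^2) * ((s+2)/s^6)" using E y2 by (intro mult_mono) auto
  also have "\<dots> = ((1+(s+1)^2) * (s+2)) / s^6" by simp
  also have "\<dots> \<le> s^4 / s^6" using p1[OF s] s by (intro divide_right_mono) auto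
  also have "\<dots> = 1/s^2" using s by (simp add: field_simps power_add[symmetric] del: power_add)
  finally show ?thesis .
qed

lemma cubeb: fixes s :: real assumes "s \<ge> 20"
  shows "s^3 = s^2 * s" "s^2 = s * s" "s^2 * s \<ge> s^2 * 20" "s * s \<ge> s * 20"
  using assms by (auto simp: power2_eq_square power3_eq_cube intro!: mult_left_mono)

lemma A3:
  fixes s y gam del :: real
  assumes s: "s \<ge> 20" and y: "s - 2 \<le> y" "y \<le> s + 1" and D: "\<bar>gam\<bar> + \<bar>del\<bar> \<le> 1/s^6"
    and u: "y - s + 1/s > 16/s^2"
  shows "(1+y^2) * (1 + gam - (1/s+del) * y) - 1 - 1/s^2 + 32/s^3 \<le> -1/s"
proof -
  define u where "u = y - s + 1/s"
  have s0: "s > 0" using s by simp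
  have "16/s^2 > 0" using s by simp
  hence upos: "u > 0" using u unfolding u_def by linarith
  have T1: "(y-s) * (y+s) \<le> u * (2 * s + 2)"
  proof -
    have "(y-s) * (y+s) \<le> u * (y+s)" using y s s0 unfolding u_def by (intro mult_right_mono) auto
    also have "\<dots> \<le> u * (2 * s + 2)" using upos y by (intro mult_left_mono) auto
    finally show ?thesis .
  qed
  have "1/s \<le> 1" using s by simp
  hence ys: "y \<ge> s - 1" using upos unfolding u_def by linarith

  have "(s-1)^2 \<le> y^2" using ys s by (intro power_mono) auto
  hence T2: "(s-1)^2 \<le> 1 + y^2" by linarith
  have "(1+y^2) * (1 + gam - (1/s+del) * y) - 1 - 1/s^2
     = (y-s) * (y+s)/s^2 - (1+y^2) * u/s + (1+y^2) * (gam - del * y)"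
    unfolding u_def by (rule Qid) (use s in auto)
  also have "\<dots> \<le> u * (2 * s + 2)/s^2 - (s-1)^2 * u / s + 1/s^2"
    using PE[OF s y D] T1 T2 upos s0
    by (intro add_mono diff_mono divide_right_mono mult_right_mono) auto
  also have "\<dots> = u * ((2 * s + 2)/s^2 - (s-1)^2 / s) + 1/s^2" by (simp add: algebra_simps)
  also have "\<dots> \<le> u * (-s/2) + 1/s^2"
  proof -
    have "(2 * s + 2)/s^2 - (s-1)^2 / s = ((2 * s + 2) - (s-1)^2 * s)/s^2" using s0 by (simp add: field_simps power2_eq_square)
    also have "\<dots> \<le> (- (s^3) / 2) / s^2"
    proof (intro divide_right_mono)
      have "(s-1)^2 * s = s^3 - 2 * s^2 + s" by (simp add: algebra_simps power2_eq_square power3_eq_cube)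
      then show "(2 * s + 2) - (s-1)^2 * s \<le> - (s^3) / 2" using cubeb[OF s] s by linarith
    qed simp
    also have "\<dots> = -s/2" using s0 by (simp add: field_simps power2_eq_square power3_eq_cube)
    finally show ?thesis using upos by (intro add_right_mono mult_left_mono) auto
  qed
  also have "\<dots> \<le> -8/s + 1/s^2"
  proof -
    have "u * s \<ge> 16/s^2 * s" using u s0 unfolding u_def by (intro mult_right_mono) auto
    also have "16/s^2 * s = 16/s" by (simp add: power2_eq_square)
    finally show ?thesis by (simp add: algebra_simps)
  qed
  finally have "(1+y^2) * (1 + gam - (1/s+del) * y) - 1 - 1/s^2 \<le> -8/s + 1/s^2" .
  moreover have "-8/s + 1/s^2 + 32/s^3 \<le> -1/s"
  proof -
    have "-8/s + 1/s^2 + 32/s^3 + 1/s = (-7 * s^2 + s + 32)/s^3" using s0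
      by (simp add: field_simps power2_eq_square power3_eq_cube)
    also have "\<dots> \<le> 0" proof (intro divide_nonpos_pos) show "-7 * s^2 + s + 32 \<le> 0" using cubeb[OF s] s by linarith qed (use s0 in auto)
    finally show ?thesis by simp
  qed
  ultimately show ?thesis by linarith
qed

lemma A4:
  fixes s y gam del :: real
  assumes s: "s \<ge> 20" and y: "s - 2 \<le> y" "y \<le> s + 1" and D: "\<bar>gam\<bar> + \<bar>del\<bar> \<le> 1/s^6"
    and u: "y - s + 1/s < - (16/s^2)"
  shows "32/s^3 - ((1+y^2) * (1 + gam - (1/s+del) * y) - 1 - 1/s^2) \<le> -1/s"
proof -
  define v where "v = - (y - s + 1/s)"
  have s0: "s > 0" using s by simp
  have "16/s^2 > 0" using s by simp
  hence vpos: "v > 0" using u unfolding v_def by linarith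
  have ysv: "y - s = - v - 1/s" unfolding v_def by simp
  have T1: "(y-s) * (2 * s + 2) \<le> (y-s) * (y+s)"
  proof (rule mult_left_mono_neg)
    show "y + s \<le> 2 * s + 2" using y by linarith
    have "1/s > 0" using s0 by simp
    then show "y - s \<le> 0" using vpos ysv by linarith
  qed
  have "(s-2)^2 \<le> y^2" using y s by (intro power_mono) auto
  hence T2: "(s-2)^2 \<le> 1 + y^2" by linarith
  have "(1+y^2) * (1 + gam - (1/s+del) * y) - 1 - 1/s^2
     = (y-s) * (y+s)/s^2 + (1+y^2) * v/s + (1+y^2) * (gam - del * y)"
    proof -
      have eq: "(1+y^2) * v / s = - ((1+y^2) * (y - s + 1/s) / s)" unfolding v_def by (simp only: mult_minus_right minus_divide_left)
      show ?thesis using Qid[of s y gam del] eq s by linarith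
    qed
  also have "\<dots> \<ge> (y-s) * (2 * s + 2)/s^2 + (s-2)^2 * v / s + (- (1/s^2))"
  proof (intro add_mono)
    show "(y-s) * (2 * s + 2)/s^2 \<le> (y-s) * (y+s)/s^2" using T1 by (intro divide_right_mono) auto
    show "(s-2)^2 * v / s \<le> (1+y^2) * v/s" using T2 vpos s0 by (intro divide_right_mono mult_right_mono) auto
    show "- (1/s^2) \<le> (1+y^2) * (gam - del * y)" using PE[OF s y D] by (simp only: abs_le_iff) linarith
  qed
  finally have Q1: "(1+y^2) * (1 + gam - (1/s+del) * y) - 1 - 1/s^2 \<ge> (y-s) * (2 * s + 2)/s^2 + (s-2)^2 * v / s + (- (1/s^2))" .
  have "(y-s) * (2 * s + 2)/s^2 + (s-2)^2 * v / s = v * ((s-2)^2 / s - (2 * s + 2)/s^2) - (2 * s + 2)/s^3"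
    using s0 unfolding ysv by (simp add: field_simps power2_eq_square power3_eq_cube)
  also have "\<dots> \<ge> v * (s/2) - (2 * s + 2)/s^3"
  proof -
    have "(s-2)^2 / s - (2 * s + 2)/s^2 = ((s-2)^2 * s - (2 * s + 2))/s^2" using s0 by (simp add: field_simps power2_eq_square)
    also have "\<dots> \<ge> ((s^3) / 2) / s^2"
    proof (intro divide_right_mono)
      have "(s-2)^2 * s = s^3 - 4 * s^2 + 4 * s" by (simp add: algebra_simps power2_eq_square power3_eq_cube)
      then show "(s^3) / 2 \<le> (s-2)^2 * s - (2 * s + 2)" using cubeb[OF s] s by linarith
    qed simp
    also have "((s^3) / 2) / s^2 = s/2" using s0 by (simp add: field_simps power2_eq_square power3_eq_cube)
    finally show ?thesis using vpos by (intro diff_right_mono mult_left_mono) auto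
  qed
  finally have Q2: "(y-s) * (2 * s + 2)/s^2 + (s-2)^2 * v / s \<ge> v * (s/2) - (2 * s + 2)/s^3" .
  have "v * s \<ge> 16/s^2 * s" using u s0 unfolding v_def by (intro mult_right_mono) auto
  also have "16/s^2 * s = 16/s" by (simp add: power2_eq_square)
  finally have Q3: "v * (s/2) \<ge> 8/s" by simp
  have "32/s^3 - 8/s + (2 * s + 2)/s^3 + 1/s^2 + 1/s = (-7 * s^2 + 3 * s + 34)/s^3" using s0
      by (simp add: field_simps power2_eq_square power3_eq_cube)
  also have "\<dots> \<le> 0" proof (intro divide_nonpos_pos) show "-7 * s^2 + 3 * s + 34 \<le> 0" using cubeb[OF s] s by linarith qed (use s0 in auto)
  finally have "32/s^3 - 8/s + (2 * s + 2)/s^3 + 1/s^2 \<le> -1/s" by simp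
  thus ?thesis using Q1 Q2 Q3 by linarith
qed

lemma small:
  fixes s gam del :: real
  assumes s: "s \<ge> 20" and D: "\<bar>gam\<bar> + \<bar>del\<bar> \<le> 1/s^6"
  shows "\<bar>gam\<bar> + \<bar>del\<bar> * (s+1) \<le> 1/(2 * s)" "1/s + del > 0"
proof -
  have s0: "s > 0" using s by simp
  have "s^3 \<le> s^6" by (rule power_increasing) (use s in auto)
  hence "s * 2 + s * (s * 2) \<le> s^6" using cubeb[OF s] s by linarith
  hence f1: "(s+1) / s^6 \<le> 1/(2 * s)" using s0 by (simp add: field_simps)
  have "\<bar>gam\<bar> + \<bar>del\<bar> * (s+1) \<le> (\<bar>gam\<bar> + \<bar>del\<bar>) * (s+1)" using s by (simp add: algebra_simps)
  also have "\<dots> \<le> (1/s^6) * (s+1)" using D s by (intro mult_right_mono) auto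
  finally show key: "\<bar>gam\<bar> + \<bar>del\<bar> * (s+1) \<le> 1/(2 * s)" using f1 by simp
  have "\<bar>del\<bar> * 1 \<le> \<bar>del\<bar> * (s+1)" using s by (intro mult_left_mono) auto
  moreover have "1/(2 * s) < 1/s" using s0 by (simp add: field_simps)
  ultimately have dl: "\<bar>del\<bar> < 1/s" using key by linarith
  then show "1/s + del > 0" by linarith
qed

lemma A1:
  fixes s y gam del :: real
  assumes s: "s \<ge> 20" and D: "\<bar>gam\<bar> + \<bar>del\<bar> \<le> 1/s^6" and y: "y > s + 1"
  shows "(1+y^2) * (1 + gam - (1/s+del) * y) - 1 \<le> -1/s"
proof -
  have s0: "s > 0" using s by simp
  note key = small(1)[OF s D] and p = small(2)[OF s D]
  have "1 + gam - (1/s+del) * y \<le> 1 + gam - (1/s+del) * (s+1)" using p y by (intro diff_left_mono mult_left_mono) auto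
  also have "\<dots> = - 1/s + gam - del * (s+1)" using s0 by (simp add: field_simps)
  also have "\<dots> \<le> 0"
  proof -
    have "\<bar>del * (s+1)\<bar> = \<bar>del\<bar> * (s+1)" using s by (simp add: abs_mult)
    moreover have "1/(2 * s) \<le> 1/s" using s0 by (simp add: field_simps)
    ultimately show ?thesis using key by (simp add: abs_le_iff)
  qed
  finally have "1 + gam - (1/s+del) * y \<le> 0" .
  hence "(1+y^2) * (1 + gam - (1/s+del) * y) \<le> 0" by (simp add: mult_nonneg_nonpos)
  moreover have "1/s \<le> 1" using s by simp
  ultimately show ?thesis by linarith
qed

lemma A2:
  fixes s y gam del :: real
  assumes s: "s \<ge> 20" and D: "\<bar>gam\<bar> + \<bar>del\<bar> \<le> 1/s^6" and y: "y < s - 2"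
  shows "1/(1+(s-2)^2) - (1 + gam - (1/s+del) * y) \<le> -1/s"
proof -
  have s0: "s > 0" using s by simp
  note key = small(1)[OF s D] and p = small(2)[OF s D]
  have "1 + gam - (1/s+del) * (s-2) \<le> 1 + gam - (1/s+del) * y" using p y by (intro diff_left_mono mult_left_mono) auto
  moreover have "1 + gam - (1/s+del) * (s-2) = 2/s + gam - del * (s-2)" using s0 by (simp add: field_simps)
  moreover have "\<bar>del * (s-2)\<bar> \<le> \<bar>del\<bar> * (s+1)" using s unfolding abs_mult by (intro mult_left_mono) auto
  moreover have "1/(1+(s-2)^2) \<le> 1/(2 * s)"
  proof -
    have "(s-2)^2 = s * s - 4 * s + 4" by (simp add: power2_eq_square algebra_simps)
    hence "2 * s \<le> 1+(s-2)^2" using cubeb[OF s] s by linarith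
    thus ?thesis using s0 by (intro divide_left_mono) auto
  qed
  moreover have "2/s = 1/(2 * s) + 1/(2 * s) + 1/s" using s0 by (simp add: field_simps)
  moreover have "- \<bar>gam\<bar> \<le> gam" "del * (s-2) \<le> \<bar>del * (s-2)\<bar>" by auto
  ultimately show ?thesis using key by linarith
qed

theorem lemma2p6:
  fixes s0 C :: real and \<gamma> \<delta> \<phi> \<phi>' :: "real \<Rightarrow> real"
  assumes bound: "\<forall>s\<ge>s0. \<bar>\<gamma> s\<bar> + \<bar>\<delta> s\<bar> \<le> C / s ^ 10"
    and deriv: "\<forall>s\<ge>s0. (\<phi> has_real_derivative \<phi>' s) (at s within {s0..})"
    and cont: "continuous_on {s0..} \<phi>'"
    and ode: "\<forall>s\<ge>s0. \<phi>' s = (1 + (\<phi> s)^2) * (1 + \<gamma> s - (1 / s + \<delta> s) * \<phi> s)"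
  shows "(\<lambda>s. \<phi> s - (s - 1 / s)) \<in> O[at_top](\<lambda>s. 1 / s ^ 2)"
proof -
  define S1 where "S1 = \<bar>s0\<bar> + \<bar>C\<bar> + 20"
  have S1: "S1 > s0" "S1 \<ge> 20" "S1 > 0" unfolding S1_def by auto
  have D: "\<bar>\<gamma> x\<bar> + \<bar>\<delta> x\<bar> \<le> 1/x^6" if x: "x \<ge> S1" for x
  proof -
    have x0: "x > 0" "x \<ge> 1" using x S1 by auto
    have "x^1 \<le> x^4" by (rule power_increasing) (use x0 in auto)
    hence "C \<le> x^4" using x unfolding S1_def by auto
    have "\<bar>\<gamma> x\<bar> + \<bar>\<delta> x\<bar> \<le> C / x^10" using bound x S1 by auto
    also have "\<dots> \<le> x^4 / x^10" using \<open>C \<le> x^4\<close> x0 by (intro divide_right_mono) auto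
    also have "x^4 / x^10 = 1/x^6" using x0 by (simp add: field_simps power_add[symmetric] del: power_add)
    finally show ?thesis .
  qed
  have Dphi: "(\<phi> has_real_derivative \<phi>' x) (at x)" if x: "x \<ge> S1" for x
  proof -
    have "(\<phi> has_real_derivative \<phi>' x) (at x within {s0..})" using deriv x S1 by auto
    hence "(\<phi> has_real_derivative \<phi>' x) (at x within {s0<..})"
      by (rule has_field_derivative_subset) auto
    moreover have "at x within {s0<..} = at x" using x S1 by (intro at_within_open) auto
    ultimately show ?thesis by simp
  qed
  have odex: "\<phi>' x = (1 + (\<phi> x)^2) * (1 + \<gamma> x - (1 / x + \<delta> x) * \<phi> x)" if x: "x \<ge> S1" for x
    using ode x S1 by auto
  obtain b1 where b1: "b1 \<ge> S1" "\<And>x. x \<ge> b1 \<Longrightarrow> \<phi> x - (x + 1) \<le> 0"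
  proof -
    have "\<exists>b\<ge>S1. \<forall>x\<ge>b. \<phi> x - (x + 1) \<le> 0"
    proof (rule eventually_nonpos[where h' = "\<lambda>x. \<phi>' x - 1"])
      fix x assume x: "x \<ge> S1"
      show "((\<lambda>x. \<phi> x - (x + 1)) has_real_derivative \<phi>' x - 1) (at x)"
        using Dphi[OF x] by (auto intro!: derivative_eq_intros)
      assume "\<phi> x - (x + 1) > 0"
      thus "\<phi>' x - 1 \<le> - 1 / x" using A1[of x "\<gamma> x" "\<delta> x" "\<phi> x"] D[OF x] odex[OF x] x S1 by auto
    qed (use S1 in auto)
    thus ?thesis using that by auto
  qed
  obtain b2 where b2: "b2 \<ge> S1" "\<And>x. x \<ge> b2 \<Longrightarrow> arctan (x - 2) - arctan (\<phi> x) \<le> 0"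
  proof -
    have "\<exists>b\<ge>S1. \<forall>x\<ge>b. arctan (x - 2) - arctan (\<phi> x) \<le> 0"
    proof (rule eventually_nonpos[where h' = "\<lambda>x. 1/(1+(x-2)^2) - (1 + \<gamma> x - (1 / x + \<delta> x) * \<phi> x)"])
      fix x assume x: "x \<ge> S1"
      have "((\<lambda>x. arctan (x - 2) - arctan (\<phi> x)) has_real_derivative
          inverse (1 + (x-2)^2) * (1 - 0) - inverse (1 + (\<phi> x)^2) * \<phi>' x) (at x)"
        using Dphi[OF x] by (intro derivative_intros) auto
      moreover have "inverse (1 + (x-2)^2) * (1 - 0) - inverse (1 + (\<phi> x)^2) * \<phi>' x
          = 1/(1+(x-2)^2) - (1 + \<gamma> x - (1 / x + \<delta> x) * \<phi> x)"
      proof -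
        have "1 + (\<phi> x)^2 > 0" by (simp add: add_pos_nonneg)
        thus ?thesis unfolding odex[OF x] by (simp add: field_simps)
      qed
      ultimately show "((\<lambda>x. arctan (x - 2) - arctan (\<phi> x)) has_real_derivative
          1/(1+(x-2)^2) - (1 + \<gamma> x - (1 / x + \<delta> x) * \<phi> x)) (at x)" by simp
      assume "arctan (x - 2) - arctan (\<phi> x) > 0"
      hence "\<phi> x < x - 2" by (simp add: arctan_less_iff)
      thus "1/(1+(x-2)^2) - (1 + \<gamma> x - (1 / x + \<delta> x) * \<phi> x) \<le> - 1 / x"
        using A2[of x "\<gamma> x" "\<delta> x" "\<phi> x"] D[OF x] x S1 by auto
    qed (use S1 in auto)
    thus ?thesis using that by auto
  qed
  define a where "a = max b1 b2"
  have a: "a \<ge> S1" "a \<ge> 20" "a > 0" using b1 b2 S1 unfolding a_def by auto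
  have crude: "x - 2 \<le> \<phi> x" "\<phi> x \<le> x + 1" if x: "x \<ge> a" for x
  proof -
    have "arctan (x - 2) \<le> arctan (\<phi> x)" using b2(2)[of x] x unfolding a_def by auto
    thus "x - 2 \<le> \<phi> x" by (simp add: arctan_le_iff)
    show "\<phi> x \<le> x + 1" using b1(2)[of x] x unfolding a_def by auto
  qed
  obtain b3 where b3: "b3 \<ge> a" "\<And>x. x \<ge> b3 \<Longrightarrow> \<phi> x - x + 1/x - 16/x^2 \<le> 0"
  proof -
    have "\<exists>b\<ge>a. \<forall>x\<ge>b. \<phi> x - x + 1/x - 16/x^2 \<le> 0"
    proof (rule eventually_nonpos[where h' = "\<lambda>x. \<phi>' x - 1 - 1/x^2 + 32/x^3"])
      fix x assume x: "x \<ge> a"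
      have x0: "x \<noteq> 0" using x a by auto
      have "((\<lambda>x. \<phi> x - x + 1/x - 16/x^2) has_real_derivative \<phi>' x - 1 - 1/x^2 + 32/x^3) (at x)"
        using Dphi[of x] x a x0 by (auto intro!: derivative_eq_intros simp: field_simps power2_eq_square power3_eq_cube)
      thus "((\<lambda>x. \<phi> x - x + 1/x - 16/x^2) has_real_derivative \<phi>' x - 1 - 1/x^2 + 32/x^3) (at x)" .
      assume "\<phi> x - x + 1/x - 16/x^2 > 0"
      thus "\<phi>' x - 1 - 1/x^2 + 32/x^3 \<le> - 1 / x"
        using A3[of x "\<phi> x" "\<gamma> x" "\<delta> x"] D[of x] odex[of x] crude[OF x] x a by auto
    qed (use a in auto)
    thus ?thesis using that by auto
  qed
  obtain b4 where b4: "b4 \<ge> a" "\<And>x. x \<ge> b4 \<Longrightarrow> - (16/x^2) - (\<phi> x - x + 1/x) \<le> 0"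
  proof -
    have "\<exists>b\<ge>a. \<forall>x\<ge>b. - (16/x^2) - (\<phi> x - x + 1/x) \<le> 0"
    proof (rule eventually_nonpos[where h' = "\<lambda>x. 32/x^3 - (\<phi>' x - 1 - 1/x^2)"])
      fix x assume x: "x \<ge> a"
      have x0: "x \<noteq> 0" using x a by auto
      show "((\<lambda>x. - (16/x^2) - (\<phi> x - x + 1/x)) has_real_derivative 32/x^3 - (\<phi>' x - 1 - 1/x^2)) (at x)"
        using Dphi[of x] x a x0 by (auto intro!: derivative_eq_intros simp: field_simps power2_eq_square power3_eq_cube)
      assume "- (16/x^2) - (\<phi> x - x + 1/x) > 0"
      thus "32/x^3 - (\<phi>' x - 1 - 1/x^2) \<le> - 1 / x"
        using A4[of x "\<phi> x" "\<gamma> x" "\<delta> x"] D[of x] odex[of x] crude[OF x] x a by auto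
    qed (use a in auto)
    thus ?thesis using that by auto
  qed
  have ev: "eventually (\<lambda>x. norm (\<phi> x - (x - 1 / x)) \<le> 16 * norm (1 / x ^ 2)) at_top"
    unfolding eventually_at_top_linorder
  proof (intro exI[of _ "max b3 b4"] allI impI)
    fix x assume x: "x \<ge> max b3 b4"
    have "\<phi> x - x + 1/x - 16/x^2 \<le> 0" "- (16/x^2) - (\<phi> x - x + 1/x) \<le> 0"
      using b3(2)[of x] b4(2)[of x] x by auto
    moreover have "norm (1 / x ^ 2) = 1/x^2" by simp
    ultimately show "norm (\<phi> x - (x - 1 / x)) \<le> 16 * norm (1 / x ^ 2)" by (simp add: abs_le_iff)
  qed
  show ?thesis by (rule bigoI[OF ev])
qed
end
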